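(* Let $a,b\in F$ with $v(a)\le\min\{0,v(b)\}$. Then for every integer $m<-v(3)$, $$\int_{t\in\mathfrak{p}^m\setminus\mathfrak{p}^{m+1}}\psi(at^3+bt)\,dt=0.$$
   Context: $F$ is a non-archimedean local field of characteristic $0$ and odd residue characteristic, with maximal ideal $\mathfrak{p}$ of its ring of integers $\mathcal{O}$, normalised valuation $v$, a fixed unramified additive character $\psi$ (trivial on $\mathcal{O}$, nontrivial on $\mathfrak{p}^{-1}$), and Haar measure $dt$ with $\mathrm{vol}(\mathcal{O})=1$. *)

theory Defs
  imports "HOL-Analysis.Analysis"
begin

text \<open>A field F (type 'a) with a normalised discrete valuation v, given on nonzero
elements as an integer; v 0 = +infinity is encoded by the ideals below.\<close>

definition pideal :: "('a::field \<Rightarrow> int) \<Rightarrow> int \<Rightarrow> 'a set" where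
  "pideal v m = {x. x = 0 \<or> m \<le> v x}"

definition normalised_discrete_valuation :: "('a::field \<Rightarrow> int) \<Rightarrow> bool" where
  "normalised_discrete_valuation v \<longleftrightarrow>
     (\<forall>x y. x \<noteq> 0 \<longrightarrow> y \<noteq> 0 \<longrightarrow> v (x * y) = v x + v y) \<and>
     (\<forall>x y. x \<noteq> 0 \<longrightarrow> y \<noteq> 0 \<longrightarrow> x + y \<noteq> 0 \<longrightarrow> min (v x) (v y) \<le> v (x + y)) \<and>
     (\<exists>\<pi>. \<pi> \<noteq> 0 \<and> v \<pi> = 1)"

definition valuation_complete :: "('a::field \<Rightarrow> int) \<Rightarrow> bool" where
  "valuation_complete v \<longleftrightarrow>
     (\<forall>X :: nat \<Rightarrow> 'a. (\<forall>n. \<exists>N. \<forall>i\<ge>N. \<forall>j\<ge>N. X i - X j \<in> pideal v n) \<longrightarrow>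
        (\<exists>L. \<forall>n. \<exists>N. \<forall>i\<ge>N. X i - L \<in> pideal v n))"

definition residue_field :: "('a::field \<Rightarrow> int) \<Rightarrow> 'a set set" where
  "residue_field v = (\<lambda>x. {y \<in> pideal v 0. y - x \<in> pideal v 1}) ` pideal v 0"

text \<open>Non-archimedean local field of characteristic 0 (char 0 via the type class
field_char_0) with odd residue characteristic (2 is not zero in O/p, i.e. 2 is not in p).\<close>
definition nonarch_local_field_odd :: "('a::field_char_0 \<Rightarrow> int) \<Rightarrow> bool" where
  "nonarch_local_field_odd v \<longleftrightarrow>
     normalised_discrete_valuation v \<and> valuation_complete v \<and>
     finite (residue_field v) \<and> (2::'a) \<notin> pideal v 1"

definition val_balls :: "('a::field \<Rightarrow> int) \<Rightarrow> 'a set set" where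
  "val_balls v = {{x. x - c \<in> pideal v n} | c n. True}"

definition haar_measure_norm :: "('a::field \<Rightarrow> int) \<Rightarrow> 'a measure \<Rightarrow> bool" where
  "haar_measure_norm v M \<longleftrightarrow>
     space M = UNIV \<and> sets M = sigma_sets UNIV (val_balls v) \<and>
     (\<forall>c A. A \<in> sets M \<longrightarrow> emeasure M ((\<lambda>x. c + x) ` A) = emeasure M A) \<and>
     emeasure M (pideal v 0) = 1"

definition unramified_additive_character :: "('a::field \<Rightarrow> int) \<Rightarrow> ('a \<Rightarrow> complex) \<Rightarrow> bool" where
  "unramified_additive_character v \<psi> \<longleftrightarrow>
     (\<forall>x y. \<psi> (x + y) = \<psi> x * \<psi> y) \<and> (\<forall>x. cmod (\<psi> x) = 1) \<and>
     (\<forall>x \<in> pideal v 0. \<psi> x = 1) \<and> (\<exists>x \<in> pideal v (-1). \<psi> x \<noteq> 1)"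

end

theory Submission imports Defs "HOL-Analysis.Analysis" begin
abbreviation "ndv \<equiv> normalised_discrete_valuation"

lemma ndv_mult: "ndv v \<Longrightarrow> x \<noteq> 0 \<Longrightarrow> y \<noteq> 0 \<Longrightarrow> v (x*y) = v x + v y"
  unfolding normalised_discrete_valuation_def by blast
lemma ndv_add: "ndv v \<Longrightarrow> x \<noteq> 0 \<Longrightarrow> y \<noteq> 0 \<Longrightarrow> x + y \<noteq> 0 \<Longrightarrow> min (v x) (v y) \<le> v (x+y)"
  unfolding normalised_discrete_valuation_def by blast
lemma ndv_pi: "ndv v \<Longrightarrow> \<exists>p. p \<noteq> 0 \<and> v p = 1"
  unfolding normalised_discrete_valuation_def by blast

lemma v_one: "ndv v \<Longrightarrow> v 1 = 0"
  using ndv_mult[of v 1 1] by simp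

lemma v_neg: assumes "ndv v" "x \<noteq> 0" shows "v (-x) = v x"
proof -
  have "v ((-1)*(-1)) = v (-1) + v (-1)" using ndv_mult[OF assms(1), of "-1" "-1"] by simp
  hence "v (-1) = 0" using v_one[OF assms(1)] by simp
  thus ?thesis using ndv_mult[OF assms(1), of "-1" x] assms by simp
qed

lemma v_inv: assumes "ndv v" "x \<noteq> 0" shows "v (inverse x) = - v x"
  using ndv_mult[OF assms(1), of x "inverse x"] assms v_one[OF assms(1)] by simp

lemma pideal_iff: "x \<in> pideal v n \<longleftrightarrow> x = 0 \<or> n \<le> v x"
  by (simp add: pideal_def)

lemma pideal_0[simp]: "0 \<in> pideal v n" by (simp add: pideal_def)

lemma pideal_self: "x \<in> pideal v (v x)" by (simp add: pideal_def)

lemma pideal_mono: "n \<le> n' \<Longrightarrow> x \<in> pideal v n' \<Longrightarrow> x \<in> pideal v n"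
  by (auto simp: pideal_def)

lemma pideal_add: assumes "ndv v" "x \<in> pideal v n" "y \<in> pideal v n" shows "x + y \<in> pideal v n"
proof (cases "x = 0 \<or> y = 0 \<or> x + y = 0")
  case True then show ?thesis using assms by auto
next
  case False
  then show ?thesis using ndv_add[OF assms(1), of x y] assms(2,3) by (auto simp: pideal_def)
qed

lemma pideal_neg: assumes "ndv v" "x \<in> pideal v n" shows "- x \<in> pideal v n"
  using assms v_neg[OF assms(1), of x] by (cases "x = 0") (auto simp: pideal_def)

lemma pideal_diff: assumes "ndv v" "x \<in> pideal v n" "y \<in> pideal v n" shows "x - y \<in> pideal v n"
  using pideal_add[OF assms(1,2) pideal_neg[OF assms(1,3)]] by simp

lemma pideal_mult: assumes "ndv v" "x \<in> pideal v n" "y \<in> pideal v n'" shows "x * y \<in> pideal v (n + n')"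
  using assms ndv_mult[OF assms(1), of x y] by (cases "x = 0 \<or> y = 0") (auto simp: pideal_def)

lemma v_strict: assumes "ndv v" "x \<noteq> 0" "y = 0 \<or> v x < v y"
  shows "x + y \<noteq> 0 \<and> v (x + y) = v x"
proof (cases "y = 0")
  case True then show ?thesis using assms by simp
next
  case False
  hence lt: "v x < v y" using assms by simp
  have ne: "x + y \<noteq> 0"
  proof
    assume "x + y = 0" hence "y = - x" by (simp add: add_eq_0_iff2)
    thus False using lt v_neg[OF assms(1,2)] by simp
  qed
  have ge: "min (v x) (v y) \<le> v (x+y)" using ndv_add[OF assms(1) assms(2) False ne] .
  have "min (v (x+y)) (v (-y)) \<le> v ((x+y) + (-y))"
    using ndv_add[OF assms(1) ne, of "-y"] False assms(2) by simp
  hence "min (v (x+y)) (v y) \<le> v x" using v_neg[OF assms(1) False] by simp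
  thus ?thesis using ge lt ne by linarith
qed

lemma exists_val: assumes "ndv v" shows "\<exists>u. u \<noteq> 0 \<and> v u = j"
proof -
  obtain p where p: "p \<noteq> 0" "v p = 1" using ndv_pi[OF assms] by blast
  have pw: "p ^ n \<noteq> 0 \<and> v (p ^ n) = int n" for n
  proof (induction n)
    case 0 then show ?case using v_one[OF assms] by simp
  next
    case (Suc n) then show ?case using ndv_mult[OF assms, of p "p^n"] p by simp
  qed
  show ?thesis
  proof (cases "j \<ge> 0")
    case True then show ?thesis using pw[of "nat j"] by (intro exI[of _ "p ^ nat j"]) auto
  next
    case False
    have "inverse (p ^ nat (-j)) \<noteq> 0 \<and> v (inverse (p ^ nat (-j))) = j"
      using pw[of "nat (-j)"] v_inv[OF assms, of "p ^ nat (-j)"] False by simp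
    then show ?thesis by blast
  qed
qed

lemma one_step:
  assumes "ndv v" "finite (residue_field v)"
  shows "\<exists>A. finite A \<and> A \<subseteq> pideal v j \<and> (\<forall>x\<in>pideal v j. \<exists>t\<in>A. x - t \<in> pideal v (j+1))"
proof -
  define cls where "cls = (\<lambda>x. {y \<in> pideal v 0. y - x \<in> pideal v 1})"
  have reseq: "residue_field v = cls ` pideal v 0" unfolding residue_field_def cls_def by (rule refl)
  have ex: "\<exists>C\<subseteq>pideal v 0. finite C \<and> residue_field v = cls ` C"
    by (rule finite_subset_image[OF assms(2)]) (simp only: reseq subset_refl)
  obtain R where R: "R \<subseteq> pideal v 0 \<and> finite R \<and> residue_field v = cls ` R"
    using ex by (rule exE) (rule that)
  have rep: "\<exists>r\<in>R. x - r \<in> pideal v 1" if "x \<in> pideal v 0" for x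
  proof -
    have "cls x \<in> cls ` pideal v 0" by (rule imageI[OF that])
    hence "cls x \<in> cls ` R" using R reseq by (simp only:)
    then obtain r where r: "r \<in> R" "cls x = cls r" by (rule imageE) (rule that)
    have "x \<in> cls x" unfolding cls_def using that by simp
    hence "x \<in> cls r" using r(2) by (simp only:)
    hence "x - r \<in> pideal v 1" by (simp add: cls_def)
    thus ?thesis by (rule bexI[OF _ r(1)])
  qed
  obtain u where u: "u \<noteq> 0" "v u = j" using exists_val[OF assms(1)] by blast
  have uj: "u \<in> pideal v j" using u pideal_self[of u v] by simp
  have ui: "inverse u \<in> pideal v (-j)" using pideal_self[of "inverse u" v] v_inv[OF assms(1) u(1)] u by simp
  show ?thesis
  proof (intro exI conjI ballI)
    show "finite ((\<lambda>r. u*r) ` R)" using R by blast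
    show "(\<lambda>r. u*r) ` R \<subseteq> pideal v j"
    proof
      fix z assume "z \<in> (\<lambda>r. u*r) ` R"
      then obtain r where r: "r \<in> R" "z = u * r" by blast
      have "r \<in> pideal v 0" using r(1) R by blast
      hence "u * r \<in> pideal v (j + 0)" by (rule pideal_mult[OF assms(1) uj])
      thus "z \<in> pideal v j" using r(2) by simp
    qed
    fix x assume x: "x \<in> pideal v j"
    have "x * inverse u \<in> pideal v 0" using pideal_mult[OF assms(1) x ui] by simp
    then obtain r where r: "r \<in> R" "x * inverse u - r \<in> pideal v 1" using rep by blast
    have "u * (x * inverse u - r) \<in> pideal v (j+1)" using pideal_mult[OF assms(1) uj r(2)] .
    moreover have "u * (x * inverse u - r) = x - u * r" using u(1) by (simp add: algebra_simps)
    ultimately have "x - u * r \<in> pideal v (j+1)" by simp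
    thus "\<exists>t\<in>(\<lambda>r. u*r) ` R. x - t \<in> pideal v (j+1)" using r(1) by blast
  qed
qed

lemma reps_aux:
  assumes "ndv v" "finite (residue_field v)"
  shows "\<forall>j. k = j + int n \<longrightarrow> (\<exists>T. finite T \<and> T \<subseteq> pideal v j \<and> (\<forall>x\<in>pideal v j. \<exists>t\<in>T. x - t \<in> pideal v k))"
proof (induction n)
  case 0
  show ?case
  proof (intro allI impI)
    fix j assume "k = j + int 0"
    hence kj: "k = j" by simp
    have "finite {0::'a} \<and> {0} \<subseteq> pideal v j \<and> (\<forall>x\<in>pideal v j. \<exists>t\<in>{0}. x - t \<in> pideal v k)"
      unfolding kj by simp
    thus "\<exists>T. finite T \<and> T \<subseteq> pideal v j \<and> (\<forall>x\<in>pideal v j. \<exists>t\<in>T. x - t \<in> pideal v k)" by (rule exI)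
  qed
next
  case (Suc n)
  show ?case
  proof (intro allI impI)
    fix j assume kj: "k = j + int (Suc n)"
    have kk: "k = (j + 1) + int n" using kj by simp
    have "\<exists>B. finite B \<and> B \<subseteq> pideal v (j+1) \<and> (\<forall>x\<in>pideal v (j+1). \<exists>t\<in>B. x - t \<in> pideal v k)"
      by (rule mp[OF spec[OF Suc.IH, of "j+1"] kk])
    then obtain B where B: "finite B \<and> B \<subseteq> pideal v (j+1) \<and> (\<forall>x\<in>pideal v (j+1). \<exists>t\<in>B. x - t \<in> pideal v k)"
      by (rule exE) (rule that)
    have "\<exists>A. finite A \<and> A \<subseteq> pideal v j \<and> (\<forall>x\<in>pideal v j. \<exists>t\<in>A. x - t \<in> pideal v (j+1))"
      by (rule one_step[OF assms])
    then obtain A where A: "finite A \<and> A \<subseteq> pideal v j \<and> (\<forall>x\<in>pideal v j. \<exists>t\<in>A. x - t \<in> pideal v (j+1))"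
      by (rule exE) (rule that)
    define T where "T = (\<lambda>p. fst p + snd p) ` (A \<times> B)"
    have Tf: "finite T" unfolding T_def using A B by simp
    have Ts: "T \<subseteq> pideal v j"
    proof
      fix z assume "z \<in> T"
      then obtain p where p: "p \<in> A \<times> B" "z = fst p + snd p" unfolding T_def by blast
      have "fst p \<in> pideal v j" using p(1) A by auto
      moreover have "snd p \<in> pideal v (j+1)" using p(1) B by auto
      hence "snd p \<in> pideal v j" by (rule pideal_mono[rotated]) simp
      ultimately show "z \<in> pideal v j" unfolding p(2) by (rule pideal_add[OF assms(1)])
    qed
    have Tc: "\<exists>t\<in>T. x - t \<in> pideal v k" if x: "x \<in> pideal v j" for x
    proof -
      obtain a where a: "a \<in> A" "x - a \<in> pideal v (j+1)" using A x by blast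
      obtain b where b: "b \<in> B" "x - a - b \<in> pideal v k" using B a(2) by blast
      have "a + b \<in> T" unfolding T_def using a(1) b(1) by (intro image_eqI[of _ _ "(a,b)"]) auto
      moreover have "x - (a + b) \<in> pideal v k" using b(2) by (simp add: diff_diff_eq)
      ultimately show ?thesis by (rule bexI[rotated])
    qed
    show "\<exists>T. finite T \<and> T \<subseteq> pideal v j \<and> (\<forall>x\<in>pideal v j. \<exists>t\<in>T. x - t \<in> pideal v k)"
      using Tf Ts Tc by blast
  qed
qed

lemma reps:
  assumes "ndv v" "finite (residue_field v)" "j \<le> k"
  shows "\<exists>T. finite T \<and> T \<subseteq> pideal v j \<and> (\<forall>x\<in>pideal v j. \<exists>t\<in>T. x - t \<in> pideal v k)"
proof -
  have "k = j + int (nat (k - j))" using assms(3) by simp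
  with reps_aux[OF assms(1,2), of k "nat (k - j)"] show ?thesis by blast
qed


lemma ball_sets: "haar_measure_norm v M \<Longrightarrow> {x. x - c \<in> pideal v n} \<in> sets M"
  unfolding haar_measure_norm_def val_balls_def by (auto intro: sigma_sets.Basic)

lemma pideal_sets: "haar_measure_norm v M \<Longrightarrow> pideal v n \<in> sets M"
  using ball_sets[of v M 0 n] by simp

lemma transl_meas: assumes "haar_measure_norm v M" shows "(\<lambda>x. x + s) \<in> measurable M M"
proof (rule measurable_sigma_sets[where \<Omega>=UNIV and A="val_balls v"])
  show "sets M = sigma_sets UNIV (val_balls v)" using assms by (simp add: haar_measure_norm_def)
  show "val_balls v \<subseteq> Pow UNIV" by simp
  show "(\<lambda>x. x + s) \<in> space M \<rightarrow> UNIV" by simp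
  fix y assume "y \<in> val_balls v"
  then obtain c n where y: "y = {x. x - c \<in> pideal v n}" unfolding val_balls_def by blast
  have "(\<lambda>x. x + s) -` y \<inter> space M = {x. x - (c - s) \<in> pideal v n}"
    using assms y by (auto simp: haar_measure_norm_def algebra_simps)
  thus "(\<lambda>x. x + s) -` y \<inter> space M \<in> sets M" using ball_sets[OF assms] by simp
qed

lemma distr_transl: assumes "haar_measure_norm v M" shows "distr M M (\<lambda>x. x + s) = M"
proof (rule measure_eqI)
  show "sets (distr M M (\<lambda>x. x + s)) = sets M" by simp
  fix A assume A: "A \<in> sets (distr M M (\<lambda>x. x + s))"
  hence A': "A \<in> sets M" by simp
  have "(\<lambda>x. x + s) -` A \<inter> space M = (\<lambda>x. - s + x) ` A"
    using assms by (auto simp: haar_measure_norm_def image_iff intro!: bexI[of _ "_ + s"])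
  hence "emeasure (distr M M (\<lambda>x. x + s)) A = emeasure M ((\<lambda>x. - s + x) ` A)"
    using emeasure_distr[OF transl_meas[OF assms] A'] by simp
  also have "\<dots> = emeasure M A" using assms A' unfolding haar_measure_norm_def by blast
  finally show "emeasure (distr M M (\<lambda>x. x + s)) A = emeasure M A" .
qed

lemma integral_transl:
  fixes g :: "'a::field \<Rightarrow> complex"
  assumes "haar_measure_norm v M" "g \<in> borel_measurable M"
  shows "integral\<^sup>L M (\<lambda>x. g (x + s)) = integral\<^sup>L M g"
  using integral_distr[OF transl_meas[OF assms(1)] assms(2)] distr_transl[OF assms(1)] by simp


theorem lemma7p6:
  fixes v :: "'a::field_char_0 \<Rightarrow> int" and M :: "'a measure" and \<psi> :: "'a \<Rightarrow> complex"
    and a b :: 'a and m :: int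
  assumes "nonarch_local_field_odd v"
    and "haar_measure_norm v M"
    and "unramified_additive_character v \<psi>"
    and "a \<noteq> 0" and "v a \<le> 0" and "b \<noteq> 0 \<longrightarrow> v a \<le> v b"
    and "m < - v 3"
  shows "(LINT t:(pideal v m - pideal v (m + 1))|M. \<psi> (a * t ^ 3 + b * t)) = 0"
proof -
  have nv: "ndv v" and fin: "finite (residue_field v)"
    using assms(1) by (auto simp: nonarch_local_field_odd_def)
  have haar: "haar_measure_norm v M" by fact
  have psi_add: "\<And>x y. \<psi> (x + y) = \<psi> x * \<psi> y" and psi_O: "\<And>x. x \<in> pideal v 0 \<Longrightarrow> \<psi> x = 1"
    and psi_nt: "\<exists>x \<in> pideal v (-1). \<psi> x \<noteq> 1"
    using assms(3) by (auto simp: unramified_additive_character_def)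
  define w where "w = v 3"
  define e where "e = w + v a + 2 * m"
  define k where "k = - e - 1"
  have three: "(3::'a) \<noteq> 0" by simp
  have one0: "(1::'a) \<in> pideal v 0" using v_one[OF nv] by (simp add: pideal_def)
  have "(1::'a) + 1 + 1 \<in> pideal v 0" using pideal_add[OF nv] one0 by blast
  hence w0: "w \<ge> 0" unfolding w_def pideal_def by (simp add: numeral_3_eq_3) 
  have m1: "m \<le> -1" using assms(7) w0 w_def by simp
  have k1: "k \<ge> m + 1" "k \<ge> 1" "w + v a + 2*k + m \<ge> 0" "v a + 3*k \<ge> 0"
  proof -
    have "m \<le> - w - 1" using assms(7) w_def by simp
    thus "k \<ge> m + 1" "k \<ge> 1" "w + v a + 2*k + m \<ge> 0" "v a + 3*k \<ge> 0"
      using assms(5) w0 unfolding k_def e_def by (simp_all add: algebra_simps)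
  qed
  have wm: "w + 2 * m < 0" using assms(7) m1 w_def by simp
  have three_p: "3 \<in> pideal v w" unfolding w_def by (rule pideal_self)
  have a_p: "a \<in> pideal v (v a)" by (rule pideal_self)
  define S where "S = pideal v m - pideal v (m + 1)"
  define h where "h x = \<psi> (a * x ^ 3 + b * x)" for x
  define cos where "cos t = {x. x - t \<in> pideal v k}" for t
  have S_iff: "x \<in> S \<longleftrightarrow> x \<noteq> 0 \<and> v x = m" for x
    unfolding S_def pideal_def by auto
  have cos_sets: "cos t \<in> sets M" for t unfolding cos_def by (rule ball_sets[OF haar])
  have S_sets: "S \<in> sets M" unfolding S_def using pideal_sets[OF haar] by blast
  have cos_sub: "cos t \<subseteq> S" if t: "t \<in> S" for t
  proof
    fix x assume "x \<in> cos t"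
    hence d: "x - t \<in> pideal v k" by (simp add: cos_def)
    have "t + (x - t) \<noteq> 0 \<and> v (t + (x - t)) = v t"
      using t d k1 by (intro v_strict[OF nv]) (auto simp: S_iff pideal_def)
    thus "x \<in> S" using t by (simp add: S_iff)
  qed
  have cos_self: "t \<in> cos t" for t by (simp add: cos_def)
  have cos_eq: "cos z = cos t" if "z \<in> cos t" for z t
  proof -
    have zt: "z - t \<in> pideal v k" using that by (simp add: cos_def)
    have "x - z \<in> pideal v k \<longleftrightarrow> x - t \<in> pideal v k" for x
    proof
      assume "x - z \<in> pideal v k" thus "x - t \<in> pideal v k"
        using pideal_add[OF nv _ zt] by fastforce
    next
      assume "x - t \<in> pideal v k" thus "x - z \<in> pideal v k"
        using pideal_diff[OF nv _ zt] by fastforce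
    qed
    thus ?thesis by (simp add: cos_def)
  qed
  show ?thesis
  proof (cases "set_integrable M S h")
    case False
    thus ?thesis unfolding set_lebesgue_integral_def set_integrable_def S_def h_def
      by (simp add: not_integrable_integral_eq)
  next
    case int: True
    have zero: "(LINT x:cos t0|M. h x) = 0" if t0: "t0 \<in> S" for t0
    proof -
      define C where "C = cos t0"
      define g where "g x = indicator C x *\<^sub>R h x" for x
      have gi: "integrable M g" unfolding g_def C_def
        using set_integrable_subset[OF int cos_sets cos_sub[OF t0]] by (simp add: set_integrable_def)
      define c0 where "c0 = 3 * a * t0 ^ 2 + b"
      have t0': "t0 \<noteq> 0" "v t0 = m" using t0 S_iff by auto
      have q0: "3 * a * t0 ^ 2 \<noteq> 0" using three assms(4) t0' by simp
      have vq: "v (3 * a * t0 ^ 2) = e"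
        using ndv_mult[OF nv, of "3*a" "t0^2"] ndv_mult[OF nv, of 3 a] ndv_mult[OF nv, of t0 t0] three assms(4) t0'
        by (simp add: e_def w_def power2_eq_square)
      have "3 * a * t0 ^ 2 + b \<noteq> 0 \<and> v (3 * a * t0 ^ 2 + b) = v (3 * a * t0 ^ 2)"
        using assms(6) vq e_def wm by (intro v_strict[OF nv q0]) auto
      hence c0: "c0 \<noteq> 0" "v c0 = e" using vq c0_def by auto
      obtain y where y: "y \<in> pideal v (-1)" "\<psi> y \<noteq> 1" using psi_nt by blast
      have y0: "y \<noteq> 0" using y psi_O[of 0] by auto
      define s0 where "s0 = y * inverse c0"
      have ci: "inverse c0 \<in> pideal v (-e)" using pideal_self[of "inverse c0" v] v_inv[OF nv c0(1)] c0 by simp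
      have keq: "-1 + - e = k" unfolding k_def by simp
      have s0k: "s0 \<in> pideal v k" using pideal_mult[OF nv y(1) ci] unfolding s0_def keq .
      have cs: "c0 * s0 = y" using c0 by (simp add: s0_def)
      have shift: "g (x + s0) = \<psi> y * g x" for x
      proof (cases "x \<in> C")
        case False
        have "x + s0 \<notin> C"
        proof
          assume "x + s0 \<in> C"
          hence "x + s0 - t0 \<in> pideal v k" by (simp add: C_def cos_def)
          hence "(x + s0 - t0) - s0 \<in> pideal v k" using pideal_diff[OF nv _ s0k] by blast
          thus False using False by (simp add: C_def cos_def)
        qed
        thus ?thesis using False by (simp add: g_def)
      next
        case True
        define d where "d = x - t0"
        have d: "d \<in> pideal v k" using True by (simp add: C_def cos_def d_def)
        have inC: "x + s0 \<in> C" using pideal_add[OF nv d s0k] by (simp add: C_def cos_def d_def algebra_simps)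
        have t0m: "t0 \<in> pideal v m" using t0' by (simp add: pideal_def)
        have dm: "d \<in> pideal v m" using pideal_mono[of m k d v] d k1 by simp
        have xm: "x \<in> pideal v m" using pideal_add[OF nv t0m dm] by (simp add: d_def)
        have tdm: "2 * t0 + d \<in> pideal v m" using pideal_add[OF nv pideal_add[OF nv t0m t0m] dm] by (simp only: mult_2)
        define r where "r = 3 * a * d * (2 * t0 + d) * s0 + 3 * a * x * (s0 * s0) + a * (s0 * s0 * s0)"
        have r1: "3 * a * d * (2 * t0 + d) * s0 \<in> pideal v (w + v a + k + m + k)"
          by (intro pideal_mult[OF nv] three_p a_p d tdm s0k)
        have r2: "3 * a * x * (s0 * s0) \<in> pideal v (w + v a + m + (k + k))"
          by (intro pideal_mult[OF nv] three_p a_p xm s0k)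
        have r3: "a * (s0 * s0 * s0) \<in> pideal v (v a + (k + k + k))"
          by (intro pideal_mult[OF nv] a_p s0k)
        have "r \<in> pideal v 0" unfolding r_def
          using k1 by (intro pideal_add[OF nv] pideal_mono[OF _ r1] pideal_mono[OF _ r2] pideal_mono[OF _ r3]) auto
        hence pr: "\<psi> r = 1" by (rule psi_O)
        have eq: "a * (x + s0) ^ 3 + b * (x + s0) = (a * x ^ 3 + b * x) + c0 * s0 + r"
          unfolding r_def c0_def d_def by algebra
        have "h (x + s0) = h x * \<psi> y"
          unfolding h_def eq cs psi_add[of "a * x ^ 3 + b * x + y" r] psi_add[of "a * x ^ 3 + b * x" y] pr
          by simp
        thus ?thesis using True inC by (simp add: g_def mult.commute)
      qed
      have "integral\<^sup>L M g = integral\<^sup>L M (\<lambda>x. g (x + s0))"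
        using integral_transl[OF haar borel_measurable_integrable[OF gi]] by simp
      also have "\<dots> = integral\<^sup>L M (\<lambda>x. \<psi> y * g x)" using shift by simp
      also have "\<dots> = \<psi> y * integral\<^sup>L M g" by simp
      finally have "(\<psi> y - 1) * integral\<^sup>L M g = 0" by (simp add: algebra_simps)
      hence "integral\<^sup>L M g = 0" using y(2) by simp
      thus ?thesis unfolding set_lebesgue_integral_def g_def C_def by simp
    qed
    obtain T where T: "finite T" "T \<subseteq> pideal v m" "\<forall>x\<in>pideal v m. \<exists>t\<in>T. x - t \<in> pideal v k"
      using reps[OF nv fin, of m k] k1 by auto
    define CC where "CC = cos ` (T \<inter> S)"
    have CCf: "finite CC" using T by (simp add: CC_def)
    have CC_S: "\<And>C. C \<in> CC \<Longrightarrow> C \<subseteq> S" using cos_sub by (auto simp: CC_def)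
    have CC_x: "cos x \<in> CC \<and> (\<forall>C\<in>CC. x \<in> C \<longrightarrow> C = cos x)" if x: "x \<in> S" for x
    proof
      have "x \<in> pideal v m" using x by (simp add: S_def)
      then obtain t where t: "t \<in> T" "x - t \<in> pideal v k" using T by blast
      have xt: "x \<in> cos t" using t by (simp add: cos_def)
      have "t \<in> cos x" using pideal_neg[OF nv t(2)] by (simp add: cos_def)
      hence "t \<in> S" using cos_sub[OF x] by blast
      thus "cos x \<in> CC" using cos_eq[OF xt] t(1) by (auto simp: CC_def)
      show "\<forall>C\<in>CC. x \<in> C \<longrightarrow> C = cos x"
      proof (intro ballI impI)
        fix C assume C: "C \<in> CC" "x \<in> C"
        then obtain t where "C = cos t" by (auto simp: CC_def)
        thus "C = cos x" using cos_eq[of x t] C(2) by simp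
      qed
    qed
    have pw: "indicator S x *\<^sub>R h x = (\<Sum>C\<in>CC. indicator C x *\<^sub>R h x)" for x
    proof (cases "x \<in> S")
      case False
      hence "\<forall>C\<in>CC. x \<notin> C" using CC_S by blast
      thus ?thesis using False by simp
    next
      case True
      have "(\<Sum>C\<in>CC. indicator C x *\<^sub>R h x) = indicator (cos x) x *\<^sub>R h x + (\<Sum>C\<in>CC - {cos x}. indicator C x *\<^sub>R h x)"
        by (rule sum.remove[OF CCf conjunct1[OF CC_x[OF True]]])
      also have "(\<Sum>C\<in>CC - {cos x}. indicator C x *\<^sub>R h x) = 0"
        using CC_x[OF True] by (intro sum.neutral) auto
      finally show ?thesis using True cos_self by simp
    qed
    have "(LINT t:S|M. h t) = integral\<^sup>L M (\<lambda>x. \<Sum>C\<in>CC. indicator C x *\<^sub>R h x)"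
      unfolding set_lebesgue_integral_def using pw by simp
    also have "\<dots> = (\<Sum>C\<in>CC. integral\<^sup>L M (\<lambda>x. indicator C x *\<^sub>R h x))"
    proof (rule Bochner_Integration.integral_sum)
      fix C assume "C \<in> CC"
      then obtain t where t: "t \<in> S" "C = cos t" by (auto simp: CC_def)
      show "integrable M (\<lambda>x. indicator C x *\<^sub>R h x)"
        using set_integrable_subset[OF int cos_sets cos_sub[OF t(1)]] t by (simp add: set_integrable_def)
    qed
    also have "\<dots> = 0"
    proof (rule sum.neutral, rule ballI)
      fix C assume "C \<in> CC"
      then obtain t where t: "t \<in> S" "C = cos t" by (auto simp: CC_def)
      show "integral\<^sup>L M (\<lambda>x. indicator C x *\<^sub>R h x) = 0"
        using zero[OF t(1)] t unfolding set_lebesgue_integral_def by simp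
    qed
    finally show ?thesis by (simp add: S_def h_def)
  qed
qed

end
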